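(* Let $T_R:\mathbb{Z}\to\mathbb{Z}$ be defined by $T_R(n)=3n/4$ if $n\equiv 0\pmod 4$, $T_R(n)=(n-2)/4$ if $n\equiv 2\pmod 4$, and $T_R(n)=(3n+1)/2$ if $n$ is odd. Define $T_R^*:\mathbb{Z}\to\mathbb{Z}$ by $T_R^*(n)=T_R(n)$ if $n\equiv 1\pmod 2$ or $n\equiv 0\pmod 4$; $T_R^*(n)=T_R^2(n)$ if $n\equiv 6\pmod 8$ or $n\equiv 2\pmod{16}$; and $T_R^*(n)=T_R^3(n)$ if $n\equiv 26\pmod{32}$, $n\equiv 10\pmod{64}$ or $n\equiv 42\pmod{64}$. Then for every integer $n$, the $T_R^*$-trajectory $((T_R^* )^k(n))_{k\ge0}$ consists of finitely many numbers congruent to $1\pmod 3$ followed only by numbers congruent to $0$ or $2\pmod 3$; that is, there is $K\ge 0$ with $(T_R^* )^k(n)\equiv 1\pmod 3$ for $0\le k<K$ and $(T_R^* )^k(n)\not\equiv 1\pmod 3$ for all $k\ge K$.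
   Context: $T_R^k$ and $(T_R^* )^k$ denote $k$-fold iterates, with the $0$-th iterate the identity. *)

theory Defs
  imports Main
begin

definition TR :: "int \<Rightarrow> int" where
  "TR n = (if n mod 4 = 0 then 3 * n div 4
           else if n mod 4 = 2 then (n - 2) div 4
           else (3 * n + 1) div 2)"

definition TRs :: "int \<Rightarrow> int" where
  "TRs n = (if n mod 2 = 1 \<or> n mod 4 = 0 then TR n
            else if n mod 8 = 6 \<or> n mod 16 = 2 then (TR ^^ 2) n
            else if n mod 32 = 26 \<or> n mod 64 = 10 \<or> n mod 64 = 42 then (TR ^^ 3) n
            else undefined)"

end

theory Submission
  imports Defs
begin

lemma split2: "(m::int) mod (b*2) = m mod b \<or> m mod (b*2) = m mod b + b"
  by (simp add: zmod_zmult2_eq) presburger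

lemma A: "(m::int) mod 2 = 1 \<or> m mod 4 = 0 \<or> m mod 8 = 6 \<or> m mod 16 = 2 \<or> m mod 32 = 26
     \<or> m mod 64 = 10 \<or> m mod 64 = 42"
  using split2[of m 2] split2[of m 4] split2[of m 8] split2[of m 16] split2[of m 32]
   pos_mod_bound[of 2 m] pos_mod_sign[of 2 m]
  by auto

lemma TR2': "TR (4*p+2) = p" unfolding TR_def by simp
lemma TR4': "TR (4*p) = 3*p" unfolding TR_def by simp
lemma TR1': "TR (2*p+1) = 3*p+2"
proof -
  have "(2*p+1) mod 2 = 1" by simp
  then have "(2*p+1) mod 4 \<noteq> 0 \<and> (2*p+1) mod 4 \<noteq> 2"
    using split2[of "2*p+1" 2] by auto
  then show ?thesis unfolding TR_def by simp
qed

lemma decomp: "(m::int) mod c = r \<Longrightarrow> m = c * (m div c) + r"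
  by (metis mult_div_mod_eq)

lemma key:
  assumes "TRs m mod 3 = 1"
  shows "m mod 3 = 1 \<and> TRs m = (m - 42) div 64 \<and> m mod 64 = 42"
proof -
  have n1: "\<not> (m mod 2 = 1)"
  proof
    assume h: "m mod 2 = 1"
    then have "TRs m = TR m" unfolding TRs_def by auto
    moreover have "m = 2*(m div 2)+1" using decomp[OF h] .
    ultimately have "TRs m = 3*(m div 2)+2" using TR1' by metis
    then show False using assms by simp
  qed
  have n2: "\<not> (m mod 4 = 0)"
  proof
    assume h: "m mod 4 = 0"
    then have "TRs m = TR m" unfolding TRs_def by auto
    moreover have "m = 4*(m div 4)" using decomp[OF h] by simp
    ultimately have "TRs m = 3*(m div 4)" using TR4' by metis
    then show False using assms by simp
  qed
  have n3: "\<not> (m mod 8 = 6)"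
  proof
    assume h: "m mod 8 = 6"
    define q where "q = m div 8"
    have q: "m = 4*(2*q+1)+2" using decomp[OF h] unfolding q_def by simp
    have "TRs m = TR (TR m)" unfolding TRs_def using h n1 n2 by (auto simp: numeral_2_eq_2)
    also have "\<dots> = 3*q+2" unfolding q TR2' TR1' ..
    finally show False using assms by simp
  qed
  have n4: "\<not> (m mod 16 = 2)"
  proof
    assume h: "m mod 16 = 2"
    define q where "q = m div 16"
    have q: "m = 4*(4*q)+2" using decomp[OF h] unfolding q_def by simp
    have "TRs m = TR (TR m)" unfolding TRs_def using h n1 n2 by (auto simp: numeral_2_eq_2)
    also have "\<dots> = 3*q" unfolding q TR2' TR4' ..
    finally show False using assms by simp
  qed
  have n5: "\<not> (m mod 32 = 26)"
  proof
    assume h: "m mod 32 = 26"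
    define q where "q = m div 32"
    have q: "m = 4*(4*(2*q+1)+2)+2" using decomp[OF h] unfolding q_def by simp
    have "TRs m = TR (TR (TR m))" unfolding TRs_def using h n1 n2 n3 n4
      by (auto simp: numeral_3_eq_3 numeral_2_eq_2)
    also have "\<dots> = 3*q+2" unfolding q TR2' TR1' ..
    finally show False using assms by simp
  qed
  have n6: "\<not> (m mod 64 = 10)"
  proof
    assume h: "m mod 64 = 10"
    define q where "q = m div 64"
    have q: "m = 4*(4*(4*q)+2)+2" using decomp[OF h] unfolding q_def by simp
    have "TRs m = TR (TR (TR m))" unfolding TRs_def using h n1 n2 n3 n4 n5
      by (auto simp: numeral_3_eq_3 numeral_2_eq_2)
    also have "\<dots> = 3*q" unfolding q TR2' TR4' ..
    finally show False using assms by simp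
  qed
  have h: "m mod 64 = 42" using A[of m] n1 n2 n3 n4 n5 n6 by blast
  define q where "q = m div 64"
  have q0: "m = 64*q+42" using decomp[OF h] unfolding q_def .
  have q: "m = 4*(4*(4*q+2)+2)+2" using q0 by simp
  have "TRs m = TR (TR (TR m))" unfolding TRs_def using h n1 n2 n3 n4 n5
    by (auto simp: numeral_3_eq_3 numeral_2_eq_2)
  also have "\<dots> = q" unfolding q TR2' ..
  finally have e: "TRs m = q" .
  have "m = q + 3*(21*q+14)" using q0 by simp
  then have "m mod 3 = (q + 3*(21*q+14)) mod 3" by (rule arg_cong)
  also have "\<dots> = q mod 3" by (rule mod_mult_self2)
  finally have m3: "m mod 3 = q mod 3" .
  have "(m - 42) div 64 = q" using q0 by simp
  with m3 show ?thesis using e assms h by simp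
qed

lemma inv: "m mod 3 \<noteq> 1 \<Longrightarrow> (TRs ^^ k) m mod 3 \<noteq> 1"
  by (induction k) (use key in auto)

lemma main: "\<exists>K::nat. (\<forall>k<K. (TRs ^^ k) n mod 3 = 1) \<and> (\<forall>k\<ge>K. (TRs ^^ k) n mod 3 \<noteq> 1)"
proof (induction "nat \<bar>n\<bar>" arbitrary: n rule: less_induct)
  case less
  show ?case
  proof (cases "n mod 3 = 1")
    case False
    then show ?thesis using inv by (intro exI[of _ 0]) auto
  next
    case True
    show ?thesis
    proof (cases "TRs n mod 3 = 1")
      case False
      have "(TRs ^^ k) n mod 3 \<noteq> 1" if k1: "k \<ge> 1" for k
      proof -
        obtain j where "k = Suc j" using k1 by (cases k) auto
        then show ?thesis using inv[OF False, of j] by (simp add: funpow_Suc_right del: funpow.simps)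
      qed
      then show ?thesis using True by (intro exI[of _ 1]) auto
    next
      case T: True
      from key[OF T] have e: "TRs n = (n - 42) div 64" and h: "n mod 64 = 42" by simp_all
      define d where "d = n div 64"
      have nd: "n = 64*d+42" using decomp[OF h] unfolding d_def .
      have "(n - 42) div 64 = d" using nd by simp
      moreover have "\<bar>d\<bar> < \<bar>n\<bar>" using nd by (simp add: abs_if)
      ultimately have "\<bar>(n - 42) div 64\<bar> < \<bar>n\<bar>" by simp
      then have "nat \<bar>TRs n\<bar> < nat \<bar>n\<bar>" unfolding e by simp
      then obtain K where K: "(\<forall>k<K. (TRs ^^ k) (TRs n) mod 3 = 1) \<and> (\<forall>k\<ge>K. (TRs ^^ k) (TRs n) mod 3 \<noteq> 1)"
        using less by blast
      show ?thesis
      proof (intro exI[of _ "Suc K"] conjI allI impI)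
        fix k assume "k < Suc K"
        then show "(TRs ^^ k) n mod 3 = 1" using K True
          by (cases k) (auto simp: funpow_Suc_right simp del: funpow.simps)
      next
        fix k assume "k \<ge> Suc K"
        then obtain j where "k = Suc j" "j \<ge> K" by (cases k) auto
        then show "(TRs ^^ k) n mod 3 \<noteq> 1" using K
          by (simp add: funpow_Suc_right del: funpow.simps)
      qed
    qed
  qed
qed

theorem theorem3:
  fixes n :: int
  shows "\<exists>K::nat. (\<forall>k<K. (TRs ^^ k) n mod 3 = 1) \<and> (\<forall>k\<ge>K. (TRs ^^ k) n mod 3 \<noteq> 1)"
  by (rule main)

end
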